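(* Let $n \geq 2$, $N = \{1,\dots,n\}$, and $\epsilon \in (0,1)$. For each $i \in N$ let $\pi_i : 2^{N\setminus\{i\}} \to \mathbb{R}_{\geq 0}$ be a local score function, and let $\tilde\pi_i$ be the $(\epsilon/n)$-pruning of $\pi_i$ (with $V = N \setminus \{i\}$, $K = n-1$). For a DAG on $N$ with arc set $A$ let $\pi(A) = \prod_{i \in N} \pi_i(A_i)$ and $\tilde\pi(A) = \prod_{i\in N} \tilde\pi_i(A_i)$, where $A_i = \{j : ji \in A\}$. Let $Z = \sum_A \pi(A)$ and $\tilde Z = \sum_A \tilde\pi(A)$, the sums ranging over all arc sets $A$ of DAGs on $N$, and assume $Z > 0$. Then: (i) $\tilde Z \geq (1-\epsilon) Z$; (ii) the Kullback–Leibler divergence $\sum_{A:\,\tilde\pi(A)>0} \frac{\tilde\pi(A)}{\tilde Z}\ln\frac{\tilde\pi(A)/\tilde Z}{\pi(A)/Z}$ of the distribution $\tilde\pi/\tilde Z$ from $\pi/Z$ is at most $\epsilon/(1-\epsilon)$; (iii) the total variation distance $\tfrac12\sum_A \bigl|\pi(A)/Z - \tilde\pi(A)/\tilde Z\bigr|$ is at most $\epsilon$.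
   Context: For $g : 2^V \to \mathbb{R}_{\geq 0}$ on a finite set $V$ with $K = |V|$ elements and $\eta \geq 0$: for $j \in S \subseteq V$ let $\psi(j,S) = \sum_{R:\, j \in R \subseteq S} g(R)\,(1+1/K)^{|R|-K} K^{|R|-|S|}$. The $\eta$-pruning of $g$ is the function $\tilde g$ with $\tilde g(S) = 0$ if $S \neq \emptyset$ and $g(S) < \eta\,\psi(j,S)$ for every $j \in S$, and $\tilde g(S) = g(S)$ otherwise. *)

theory Defs
  imports Complex_Main
begin

definition psi :: "('a set \<Rightarrow> real) \<Rightarrow> nat \<Rightarrow> 'a \<Rightarrow> 'a set \<Rightarrow> real" where
  "psi g K j S = (\<Sum>R\<in>{R. j \<in> R \<and> R \<subseteq> S}.
      g R * (1 + 1 / real K) powi (int (card R) - int K) * (real K) powi (int (card R) - int (card S)))"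

definition prune :: "('a set \<Rightarrow> real) \<Rightarrow> nat \<Rightarrow> real \<Rightarrow> 'a set \<Rightarrow> real" where
  "prune g K \<eta> S = (if S \<noteq> {} \<and> (\<forall>j\<in>S. g S < \<eta> * psi g K j S) then 0 else g S)"

text \<open>Arc sets of DAGs on the node set {1..n}; an arc (j,i) means j -> i.\<close>
definition dags :: "nat \<Rightarrow> (nat \<times> nat) set set" where
  "dags n = {A. A \<subseteq> {1..n} \<times> {1..n} \<and> acyclic A}"

definition parents :: "(nat \<times> nat) set \<Rightarrow> nat \<Rightarrow> nat set" where
  "parents A i = {j. (j, i) \<in> A}"

definition weight :: "nat \<Rightarrow> (nat \<Rightarrow> nat set \<Rightarrow> real) \<Rightarrow> (nat \<times> nat) set \<Rightarrow> real" where
  "weight n p A = (\<Prod>i\<in>{1..n}. p i (parents A i))"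

end

theory Submission
  imports Defs
begin

lemma sum_Pow_power:
  fixes x :: real
  assumes "finite U"
  shows "(\<Sum>T\<in>Pow U. x ^ card T) = (1 + x) ^ card U"
  using prod_add[OF assms, of "\<lambda>_. x" "\<lambda>_. 1"] by (simp add: add.commute)

lemma coef_sum:
  fixes R V :: "'a set" and K :: nat
  assumes "finite V" "card V = K" "K \<ge> 1" "R \<subseteq> V"
  shows "(\<Sum>S\<in>{S. R \<subseteq> S \<and> S \<subseteq> V}.
      (1 + 1 / real K) powi (int (card R) - int K) * (real K) powi (int (card R) - int (card S))) = 1"
proof -
  have fR: "finite R" using assms finite_subset by blast
  have bij: "bij_betw (\<lambda>T. R \<union> T) (Pow (V - R)) {S. R \<subseteq> S \<and> S \<subseteq> V}"
    by (rule bij_betw_byWitness[where f' = "\<lambda>S. S - R"]) (use assms in auto)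
  have "(\<Sum>S\<in>{S. R \<subseteq> S \<and> S \<subseteq> V}. (real K) powi (int (card R) - int (card S)))
      = (\<Sum>T\<in>Pow (V - R). (real K) powi (int (card R) - int (card (R \<union> T))))"
    using sum.reindex_bij_betw[OF bij, of "\<lambda>S. (real K) powi (int (card R) - int (card S))"] by simp
  also have "\<dots> = (\<Sum>T\<in>Pow (V - R). (1 / real K) ^ card T)"
  proof (rule sum.cong)
    fix T assume T: "T \<in> Pow (V - R)"
    have "finite T" using T assms(1) finite_subset by auto
    then have "card (R \<union> T) = card R + card T" using T fR by (subst card_Un_disjoint) auto
    then have "int (card R) - int (card (R \<union> T)) = - int (card T)" by simp
    then show "(real K) powi (int (card R) - int (card (R \<union> T))) = (1 / real K) ^ card T"
      by (simp only: power_int_minus power_int_of_nat power_inverse divide_inverse mult_1)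
  qed simp
  also have "\<dots> = (1 + 1 / real K) ^ card (V - R)"
    using assms(1) by (simp add: sum_Pow_power)
  also have "card (V - R) = K - card R" using assms fR by (simp add: card_Diff_subset)
  finally have e: "(\<Sum>S\<in>{S. R \<subseteq> S \<and> S \<subseteq> V}. (real K) powi (int (card R) - int (card S)))
      = (1 + 1 / real K) ^ (K - card R)" .
  have cR: "card R \<le> K" using assms card_mono by blast
  have "int (card R) - int K = - int (K - card R)" using cR by simp
  then have "(1 + 1 / real K) powi (int (card R) - int K) = inverse ((1 + 1 / real K) ^ (K - card R))"
    by (simp only: power_int_minus power_int_of_nat)
  moreover have "(1 + 1 / real K) ^ (K - card R) \<noteq> 0"
  proof -
    have "(0::real) < 1 + 1 / real K" using assms(3) by (simp add: add_pos_pos)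
    then show ?thesis by simp
  qed
  ultimately show ?thesis
    by (simp only: sum_distrib_left[symmetric] e) simp
qed

lemma finite_dags: "finite (dags n)"
proof -
  have "dags n \<subseteq> Pow ({1..n} \<times> {1..n})" unfolding dags_def by auto
  then show ?thesis by (rule finite_subset) simp
qed

lemma parents_sub:
  assumes "A \<in> dags n" shows "parents A i \<subseteq> {1..n} - {i}"
proof
  fix j assume j: "j \<in> parents A i"
  then have ji: "(j, i) \<in> A" by (simp add: parents_def)
  have ac: "acyclic A" and sub: "A \<subseteq> {1..n} \<times> {1..n}" using assms by (auto simp: dags_def)
  have "j \<noteq> i"
  proof
    assume "j = i"
    then have "(i, i) \<in> A\<^sup>+" using ji by auto
    then show False using ac by (simp add: acyclic_def)
  qed
  then show "j \<in> {1..n} - {i}" using ji sub by auto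
qed

lemma weight_nonneg:
  assumes "A \<in> dags n"
    and nonneg: "\<And>i S. i \<in> {1..n} \<Longrightarrow> S \<subseteq> {1..n} - {i} \<Longrightarrow> \<pi> i S \<ge> 0"
  shows "weight n \<pi> A \<ge> 0"
  unfolding weight_def by (rule prod_nonneg) (use nonneg parents_sub[OF assms(1)] in blast)

definition upd :: "(nat \<times> nat) set \<Rightarrow> nat \<Rightarrow> nat set \<Rightarrow> (nat \<times> nat) set" where
  "upd A i R = {e\<in>A. snd e \<noteq> i} \<union> (\<lambda>a. (a, i)) ` R"

lemma parents_upd: "parents (upd A i R) k = (if k = i then R else parents A k)"
  unfolding parents_def upd_def by auto

lemma upd_upd: "upd (upd A i R) i S = upd A i S"
  unfolding upd_def by auto

lemma upd_self: "upd A i (parents A i) = A"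
  unfolding upd_def parents_def by auto

lemma upd_dags: "A \<in> dags n \<Longrightarrow> R \<subseteq> parents A i \<Longrightarrow> upd A i R \<in> dags n"
proof -
  assume A: "A \<in> dags n" and R: "R \<subseteq> parents A i"
  have "upd A i R \<subseteq> A" using R unfolding upd_def parents_def by auto
  then show ?thesis using A unfolding dags_def using acyclic_subset by blast
qed

lemma weight_split:
  assumes "i \<in> {1..n}"
  shows "weight n p A = p i (parents A i) * (\<Prod>k\<in>{1..n}-{i}. p k (parents A k))"
  unfolding weight_def using assms by (simp add: prod.remove)

lemma weight_upd:
  assumes "i \<in> {1..n}"
  shows "weight n p (upd A i R) = p i R * (\<Prod>k\<in>{1..n}-{i}. p k (parents A k))"
  using weight_split[OF assms, of p "upd A i R"] by (simp add: parents_upd)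


lemma key:
  fixes n i :: nat and \<pi> :: "nat \<Rightarrow> nat set \<Rightarrow> real" and \<eta> :: real
  assumes n: "n \<ge> 2" and i: "i \<in> {1..n}" and eta: "\<eta> \<ge> 0"
    and nonneg: "\<And>i S. i \<in> {1..n} \<Longrightarrow> S \<subseteq> {1..n} - {i} \<Longrightarrow> \<pi> i S \<ge> 0"
  shows "(\<Sum>A\<in>{A\<in>dags n. parents A i \<noteq> {} \<and> (\<forall>j\<in>parents A i.
             \<pi> i (parents A i) < \<eta> * psi (\<pi> i) (n - 1) j (parents A i))}. weight n \<pi> A)
         \<le> \<eta> * (\<Sum>A\<in>dags n. weight n \<pi> A)"
proof -
  define K where "K = n - 1"
  define V where "V = {1..n} - {i}"
  define D where "D = dags n"
  define c where "c R S = (1 + 1 / real K) powi (int (card R) - int K) * (real K) powi (int (card R) - int (card S))" for R S :: "nat set"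
  define r where "r A = (\<Prod>k\<in>{1..n}-{i}. \<pi> k (parents A k))" for A
  define w where "w A = weight n \<pi> A" for A
  define Pr where "Pr A = (parents A i \<noteq> {} \<and> (\<forall>j\<in>parents A i.
             \<pi> i (parents A i) < \<eta> * psi (\<pi> i) (n - 1) j (parents A i)))" for A
  define f where "f AR = c (snd AR) (parents (fst AR) i) * w (upd (fst AR) i (snd AR))" for AR
  define g where "g BS = c (parents (fst BS) i) (snd BS) * w (fst BS)" for BS
  define h where "h AR = (upd (fst AR) i (snd AR), parents (fst AR) i)" for AR
  define Q where "Q = Sigma D (\<lambda>A. Pow (parents A i))"
  have K1: "K \<ge> 1" using n by (simp add: K_def)
  have finV: "finite V" by (simp add: V_def)
  have cardV: "card V = K" using i by (simp add: V_def K_def)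
  have finD: "finite D" by (simp add: D_def finite_dags)
  have c_nn: "c R S \<ge> 0" for R S using K1 by (simp add: c_def)
  have w_nn: "A \<in> D \<Longrightarrow> w A \<ge> 0" for A
    using weight_nonneg[OF _ nonneg] by (simp add: w_def D_def)
  have r_nn: "A \<in> D \<Longrightarrow> r A \<ge> 0" for A
    unfolding r_def by (rule prod_nonneg) (use nonneg parents_sub[of A n] D_def in auto)
  have par_sub: "A \<in> D \<Longrightarrow> parents A i \<subseteq> V" for A
    using parents_sub[of A n i] by (simp add: D_def V_def)
  have finPar: "A \<in> D \<Longrightarrow> finite (parents A i)" for A
    using par_sub finV finite_subset by blast
  have wsplit: "w A = \<pi> i (parents A i) * r A" for A
    using weight_split[OF i] by (simp add: w_def r_def)
  have wupd: "w (upd A i R) = \<pi> i R * r A" for A R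
    using weight_upd[OF i] by (simp add: w_def r_def)
  have step1: "w A \<le> \<eta> * (\<Sum>R\<in>Pow (parents A i). f (A, R))" if A: "A \<in> D" "Pr A" for A
  proof -
    define S where "S = parents A i"
    obtain j where j: "j \<in> S" using A(2) by (auto simp: Pr_def S_def)
    have lt: "\<pi> i S < \<eta> * psi (\<pi> i) (n - 1) j S" using A(2) j by (simp add: Pr_def S_def)
    have SV: "S \<subseteq> V" using par_sub A(1) by (simp add: S_def)
    have finS: "finite S" using finPar A(1) by (simp add: S_def)
    have psi_eq: "psi (\<pi> i) (n - 1) j S = (\<Sum>R\<in>{R. j \<in> R \<and> R \<subseteq> S}. \<pi> i R * c R S)"
      unfolding psi_def c_def K_def by (simp add: mult.assoc)
    have "w A = \<pi> i S * r A" using wsplit by (simp add: S_def)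
    also have "\<dots> \<le> \<eta> * psi (\<pi> i) (n - 1) j S * r A"
      using lt r_nn[OF A(1)] by (simp add: mult_right_mono)
    also have "\<dots> = \<eta> * (\<Sum>R\<in>{R. j \<in> R \<and> R \<subseteq> S}. \<pi> i R * c R S * r A)"
      unfolding psi_eq by (simp add: sum_distrib_right mult.assoc)
    also have "\<dots> \<le> \<eta> * (\<Sum>R\<in>Pow S. \<pi> i R * c R S * r A)"
    proof (rule mult_left_mono[OF _ eta], rule sum_mono2)
      show "finite (Pow S)" using finS by simp
      show "{R. j \<in> R \<and> R \<subseteq> S} \<subseteq> Pow S" by auto
      fix R assume "R \<in> Pow S - {R. j \<in> R \<and> R \<subseteq> S}"
      then have "R \<subseteq> {1..n} - {i}" using SV by (auto simp: V_def)
      then show "0 \<le> \<pi> i R * c R S * r A"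
        using nonneg[OF i] c_nn r_nn[OF A(1)] by (simp add: mult_nonneg_nonneg)
    qed
    also have "\<dots> = \<eta> * (\<Sum>R\<in>Pow S. f (A, R))"
      by (simp add: f_def wupd S_def mult_ac)
    finally show ?thesis by (simp add: S_def)
  qed
  have "(\<Sum>A\<in>{A\<in>D. Pr A}. w A) \<le> (\<Sum>A\<in>{A\<in>D. Pr A}. \<eta> * (\<Sum>R\<in>Pow (parents A i). f (A, R)))"
    by (rule sum_mono) (use step1 in auto)
  also have "\<dots> \<le> (\<Sum>A\<in>D. \<eta> * (\<Sum>R\<in>Pow (parents A i). f (A, R)))"
  proof (rule sum_mono2[OF finD])
    fix A assume "A \<in> D - {A \<in> D. Pr A}"
    then have A: "A \<in> D" by simp
    have "f (A, R) \<ge> 0" if "R \<in> Pow (parents A i)" for R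
      using that A c_nn w_nn upd_dags[of A n R i] by (simp add: f_def D_def)
    then have "0 \<le> (\<Sum>R\<in>Pow (parents A i). f (A, R))" by (intro sum_nonneg) auto
    then show "0 \<le> \<eta> * (\<Sum>R\<in>Pow (parents A i). f (A, R))"
      using eta by simp
  qed auto
  also have "\<dots> = \<eta> * (\<Sum>AR\<in>Q. f AR)"
    unfolding Q_def using finD finPar by (simp add: sum_distrib_left sum.Sigma)
  also have "(\<Sum>AR\<in>Q. f AR) = (\<Sum>BS\<in>h ` Q. g BS)"
  proof -
    have inj: "inj_on h Q"
    proof (rule inj_onI)
      fix x y assume "x \<in> Q" "y \<in> Q" "h x = h y"
      then have e1: "upd (fst x) i (snd x) = upd (fst y) i (snd y)"
        and e2: "parents (fst x) i = parents (fst y) i" by (auto simp: h_def)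
      have "snd x = snd y" using arg_cong[OF e1, of "\<lambda>B. parents B i"] by (simp add: parents_upd)
      moreover have "fst x = fst y"
        using arg_cong[OF e1, of "\<lambda>B. upd B i (parents (fst x) i)"] e2
        by (metis upd_upd upd_self)
      ultimately show "x = y" by (simp add: prod_eq_iff)
    qed
    have "(\<Sum>BS\<in>h ` Q. g BS) = (\<Sum>AR\<in>Q. g (h AR))" using sum.reindex[OF inj, of g] by (simp add: comp_def)
    also have "\<dots> = (\<Sum>AR\<in>Q. f AR)"
      by (rule sum.cong) (auto simp: f_def g_def h_def parents_upd)
    finally show ?thesis by simp
  qed
  also have "(\<Sum>BS\<in>h ` Q. g BS) \<le> (\<Sum>BS\<in>Sigma D (\<lambda>B. {S. parents B i \<subseteq> S \<and> S \<subseteq> V}). g BS)"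
  proof (rule sum_mono2)
    show "finite (Sigma D (\<lambda>B. {S. parents B i \<subseteq> S \<and> S \<subseteq> V}))"
      using finD finV by (intro finite_SigmaI) auto
    show "h ` Q \<subseteq> Sigma D (\<lambda>B. {S. parents B i \<subseteq> S \<and> S \<subseteq> V})"
    proof
      fix x assume "x \<in> h ` Q"
      then obtain A R where AR: "A \<in> D" "R \<subseteq> parents A i" and x: "x = h (A, R)"
        by (auto simp: Q_def)
      show "x \<in> Sigma D (\<lambda>B. {S. parents B i \<subseteq> S \<and> S \<subseteq> V})"
        using AR par_sub[OF AR(1)] upd_dags[of A n R i] by (auto simp: x h_def parents_upd D_def)
    qed
    fix x assume "x \<in> Sigma D (\<lambda>B. {S. parents B i \<subseteq> S \<and> S \<subseteq> V}) - h ` Q"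
    then show "0 \<le> g x" using c_nn w_nn by (auto simp: g_def)
  qed
  also have "\<dots> = (\<Sum>B\<in>D. w B * (\<Sum>S\<in>{S. parents B i \<subseteq> S \<and> S \<subseteq> V}. c (parents B i) S))"
  proof -
    have "(\<Sum>BS\<in>Sigma D (\<lambda>B. {S. parents B i \<subseteq> S \<and> S \<subseteq> V}). g BS)
       = (\<Sum>B\<in>D. \<Sum>S\<in>{S. parents B i \<subseteq> S \<and> S \<subseteq> V}. g (B, S))"
      using sum.Sigma[of D "\<lambda>B. {S. parents B i \<subseteq> S \<and> S \<subseteq> V}" "\<lambda>B S. g (B, S)"] finD finV
      by (simp add: split_def)
    then show ?thesis by (simp add: g_def sum_distrib_left mult_ac)
  qed
  also have "\<dots> = (\<Sum>B\<in>D. w B)"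
  proof (rule sum.cong)
    fix B assume "B \<in> D"
    then have "(\<Sum>S\<in>{S. parents B i \<subseteq> S \<and> S \<subseteq> V}. c (parents B i) S) = 1"
      unfolding c_def using coef_sum[OF finV cardV K1 par_sub] by blast
    then show "w B * (\<Sum>S\<in>{S. parents B i \<subseteq> S \<and> S \<subseteq> V}. c (parents B i) S) = w B" by simp
  qed simp
  finally show ?thesis
    using eta by (simp add: w_def D_def Pr_def mult_left_mono)
qed


theorem theorem2:
  fixes n :: nat and \<epsilon> :: real and \<pi> :: "nat \<Rightarrow> nat set \<Rightarrow> real"
  assumes n: "n \<ge> 2"
    and eps: "0 < \<epsilon>" "\<epsilon> < 1"
    and nonneg: "\<And>i S. i \<in> {1..n} \<Longrightarrow> S \<subseteq> {1..n} - {i} \<Longrightarrow> \<pi> i S \<ge> 0"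
  defines "Z \<equiv> (\<Sum>A\<in>dags n. weight n \<pi> A)"
    and "Zt \<equiv> (\<Sum>A\<in>dags n. weight n (\<lambda>i. prune (\<pi> i) (n - 1) (\<epsilon> / real n)) A)"
  assumes Zpos: "Z > 0"
  shows "Zt \<ge> (1 - \<epsilon>) * Z
     \<and> (\<Sum>A\<in>{A\<in>dags n. weight n (\<lambda>i. prune (\<pi> i) (n - 1) (\<epsilon> / real n)) A > 0}.
            (weight n (\<lambda>i. prune (\<pi> i) (n - 1) (\<epsilon> / real n)) A / Zt) * ln ((weight n (\<lambda>i. prune (\<pi> i) (n - 1) (\<epsilon> / real n)) A / Zt) / (weight n \<pi> A / Z)))
          \<le> \<epsilon> / (1 - \<epsilon>)
     \<and> (1/2) * (\<Sum>A\<in>dags n. \<bar>weight n \<pi> A / Z - weight n (\<lambda>i. prune (\<pi> i) (n - 1) (\<epsilon> / real n)) A / Zt\<bar>) \<le> \<epsilon>"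
proof -
  define \<eta> where "\<eta> = \<epsilon> / real n"
  define wt where "wt = weight n (\<lambda>i. prune (\<pi> i) (n - 1) (\<epsilon> / real n))"
  define w where "w = weight n \<pi>"
  define D where "D = dags n"
  define Pr where "Pr i A = (parents A i \<noteq> {} \<and> (\<forall>j\<in>parents A i.
             \<pi> i (parents A i) < \<eta> * psi (\<pi> i) (n - 1) j (parents A i)))" for i A
  define P where "P A = (\<exists>i\<in>{1..n}. Pr i A)" for A
  have eta: "\<eta> \<ge> 0" using eps by (simp add: \<eta>_def)
  have finD: "finite D" by (simp add: D_def finite_dags)
  have Zd: "Z = (\<Sum>A\<in>D. w A)" by (simp add: Z_def D_def w_def)
  have Ztd: "Zt = (\<Sum>A\<in>D. wt A)" by (simp add: Zt_def D_def wt_def)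
  have w_nn: "A \<in> D \<Longrightarrow> w A \<ge> 0" for A
    using weight_nonneg[OF _ nonneg] by (simp add: w_def D_def)
  have wt_eq: "wt A = (if P A then 0 else w A)" for A
  proof (cases "P A")
    case True
    then obtain i where i: "i \<in> {1..n}" "Pr i A" by (auto simp: P_def)
    have "prune (\<pi> i) (n - 1) (\<epsilon> / real n) (parents A i) = 0"
      using i(2) by (simp add: prune_def Pr_def \<eta>_def)
    then have "wt A = 0" unfolding wt_def weight_def using i(1)
      by (intro prod_zero) auto
    then show ?thesis using True by simp
  next
    case False
    have "wt A = w A" unfolding wt_def w_def weight_def
    proof (rule prod.cong)
      fix i assume "i \<in> {1..n}"
      then have "\<not> Pr i A" using False by (auto simp: P_def)
      then show "prune (\<pi> i) (n - 1) (\<epsilon> / real n) (parents A i) = \<pi> i (parents A i)"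
        by (auto simp: prune_def Pr_def \<eta>_def)
    qed simp
    then show ?thesis using False by simp
  qed
  have wt_nn: "A \<in> D \<Longrightarrow> wt A \<ge> 0" for A using w_nn wt_eq by simp
  have ZtZ: "Zt \<le> Z" unfolding Zd Ztd by (rule sum_mono) (use wt_eq w_nn in auto)
  have diff: "w A - wt A \<le> (\<Sum>i\<in>{1..n}. if Pr i A then w A else 0)" if A: "A \<in> D" for A
  proof (cases "P A")
    case True
    then obtain i where i: "i \<in> {1..n}" "Pr i A" by (auto simp: P_def)
    have "w A = (if Pr i A then w A else 0)" using i by simp
    also have "\<dots> \<le> (\<Sum>i\<in>{1..n}. if Pr i A then w A else 0)"
      by (rule member_le_sum) (use i w_nn A in auto)
    finally show ?thesis using wt_nn[OF A] by simp
  next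
    case False
    then show ?thesis using wt_eq w_nn[OF A] by (simp add: sum_nonneg)
  qed
  have "Z - Zt = (\<Sum>A\<in>D. w A - wt A)" by (simp add: Zd Ztd sum_subtractf)
  also have "\<dots> \<le> (\<Sum>A\<in>D. \<Sum>i\<in>{1..n}. if Pr i A then w A else 0)"
    by (rule sum_mono) (use diff in auto)
  also have "\<dots> = (\<Sum>i\<in>{1..n}. \<Sum>A\<in>{A\<in>D. Pr i A}. w A)"
    by (subst sum.swap) (simp add: sum.inter_filter[OF finD])
  also have "\<dots> \<le> (\<Sum>i\<in>{1..n}. \<eta> * Z)"
  proof (rule sum_mono)
    fix i assume i: "i \<in> {1..n}"
    show "(\<Sum>A\<in>{A\<in>D. Pr i A}. w A) \<le> \<eta> * Z"
      using key[OF n i eta nonneg] by (simp add: Pr_def D_def w_def Z_def)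
  qed
  also have "\<dots> = \<epsilon> * Z" using n by (simp add: \<eta>_def)
  finally have part1: "Zt \<ge> (1 - \<epsilon>) * Z" by (simp add: algebra_simps)
  have Ztpos: "Zt > 0" using part1 eps Zpos by (smt (verit) mult_pos_pos)
  have "(\<Sum>A\<in>{A\<in>D. wt A > 0}. (wt A / Zt) * ln ((wt A / Zt) / (w A / Z)))
      = (\<Sum>A\<in>{A\<in>D. wt A > 0}. wt A * (ln (Z / Zt) / Zt))"
  proof (rule sum.cong)
    fix A assume "A \<in> {A\<in>D. wt A > 0}"
    then have pos: "wt A > 0" by simp
    then have e: "wt A = w A" using wt_eq by (auto split: if_splits)
    then have "(wt A / Zt) / (w A / Z) = Z / Zt" using pos Zpos Ztpos by (simp add: field_simps)
    then show "(wt A / Zt) * ln ((wt A / Zt) / (w A / Z)) = wt A * (ln (Z / Zt) / Zt)" by simp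
  qed simp
  also have "\<dots> = (\<Sum>A\<in>{A\<in>D. wt A > 0}. wt A) * (ln (Z / Zt) / Zt)"
    by (rule sum_distrib_right[symmetric])
  also have "(\<Sum>A\<in>{A\<in>D. wt A > 0}. wt A) = Zt"
  proof -
    have "(\<Sum>A\<in>{A\<in>D. wt A > 0}. wt A) = (\<Sum>A\<in>D. if wt A > 0 then wt A else 0)"
      by (simp add: sum.inter_filter[OF finD])
    also have "\<dots> = (\<Sum>A\<in>D. wt A)"
      by (rule sum.cong) (use wt_nn in force)+
    finally show ?thesis by (simp add: Ztd)
  qed
  also have "Zt * (ln (Z / Zt) / Zt) = ln (Z / Zt)" using Ztpos by simp
  also have "ln (Z / Zt) \<le> Z / Zt - 1" using Zpos Ztpos by (intro ln_le_minus_one) simp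
  also have "Z / Zt - 1 \<le> \<epsilon> / (1 - \<epsilon>)"
  proof -
    have "Z / Zt \<le> 1 / (1 - \<epsilon>)" using part1 eps Ztpos Zpos by (simp add: field_simps)
    then show ?thesis using eps by (simp add: field_simps)
  qed
  finally have part2: "(\<Sum>A\<in>{A\<in>D. wt A > 0}. (wt A / Zt) * ln ((wt A / Zt) / (w A / Z)))
      \<le> \<epsilon> / (1 - \<epsilon>)" .
  have "(\<Sum>A\<in>D. \<bar>w A / Z - wt A / Zt\<bar>) = (\<Sum>A\<in>D. w A / Z + wt A / Zt - 2 * (wt A / Z))"
  proof (rule sum.cong)
    fix A assume A: "A \<in> D"
    show "\<bar>w A / Z - wt A / Zt\<bar> = w A / Z + wt A / Zt - 2 * (wt A / Z)"
    proof (cases "P A")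
      case True
      then show ?thesis using wt_eq w_nn[OF A] Zpos by simp
    next
      case False
      then have e: "wt A = w A" using wt_eq by simp
      have "w A / Z \<le> w A / Zt" using w_nn[OF A] Ztpos ZtZ by (intro divide_left_mono) auto
      then show ?thesis using e by simp
    qed
  qed simp
  also have "\<dots> = Z / Z + Zt / Zt - 2 * (Zt / Z)"
  proof -
    have "(\<Sum>A\<in>D. w A / Z + wt A / Zt - 2 * (wt A / Z))
        = (\<Sum>A\<in>D. w A) / Z + (\<Sum>A\<in>D. wt A) / Zt - 2 * ((\<Sum>A\<in>D. wt A) / Z)"
      by (simp add: sum.distrib sum_subtractf sum_divide_distrib sum_distrib_left)
    then show ?thesis by (simp only: Zd[symmetric] Ztd[symmetric])
  qed
  also have "\<dots> = 2 - 2 * (Zt / Z)" using Zpos Ztpos by simp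
  finally have "(1/2) * (\<Sum>A\<in>D. \<bar>w A / Z - wt A / Zt\<bar>) = 1 - Zt / Z" by simp
  also have "\<dots> \<le> \<epsilon>" using part1 Zpos by (simp add: field_simps)
  finally have part3: "(1/2) * (\<Sum>A\<in>D. \<bar>w A / Z - wt A / Zt\<bar>) \<le> \<epsilon>" .
  show ?thesis
    unfolding wt_def[symmetric] w_def[symmetric] D_def[symmetric]
    using part1 part2 part3 by blast
qed

end
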